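(* If a Sturmian sequence $\epsilon\in\{H,V\}^{\mathbb{Z}}$ is almost symmetric, then so is its derived sequence $\epsilon'$.
   Context: A Sturmian sequence is a biinfinite sequence over two letters that is not eventually periodic and has exactly $n+1$ distinct subwords of each length $n$; in such a sequence one of the letters is isolated (never occurs twice consecutively). The derived sequence $\epsilon'$ is obtained from $\epsilon$ by deleting one occurrence of the non-isolated letter from each maximal block of consecutive occurrences of it. A sequence $\epsilon$ is almost symmetric if there is $N$ with $\epsilon_{N+k}=\epsilon_{N-k-1}$ for all $k\ge1$ and $\epsilon_N\ne\epsilon_{N-1}$. *)

theory Defs
  imports Main
begin

datatype letter = H | V

type_synonym bisequence = "int \<Rightarrow> letter"

definition subword :: "bisequence \<Rightarrow> int \<Rightarrow> nat \<Rightarrow> letter list" where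
  "subword e i n = map (\<lambda>j. e (i + int j)) [0..<n]"

definition eventually_periodic :: "bisequence \<Rightarrow> bool" where
  "eventually_periodic e \<longleftrightarrow> (\<exists>p::int. p > 0 \<and> (\<exists>N. \<forall>k\<ge>N. e (k + p) = e k))"

definition sturmian :: "bisequence \<Rightarrow> bool" where
  "sturmian e \<longleftrightarrow> \<not> eventually_periodic e \<and>
     (\<forall>n. card {subword e i n | i. True} = n + 1)"

definition almost_symmetric :: "bisequence \<Rightarrow> bool" where
  "almost_symmetric e \<longleftrightarrow>
     (\<exists>N::int. (\<forall>k\<ge>1. e (N + k) = e (N - k - 1)) \<and> e N \<noteq> e (N - 1))"

text \<open>e' is the derived sequence of e: b is the non-isolated letter (it occurs twice
  consecutively), one occurrence of b (the first one) is deleted from each maximal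
  block of b's, and the remaining positions are re-indexed increasingly by f.\<close>
definition derived_seq :: "bisequence \<Rightarrow> bisequence \<Rightarrow> bool" where
  "derived_seq e e' \<longleftrightarrow>
     (\<exists>b f. (\<exists>i. e i = b \<and> e (i + 1) = b) \<and> strict_mono (f :: int \<Rightarrow> int) \<and>
        range f = {i. \<not> (e i = b \<and> e (i - 1) \<noteq> b)} \<and>
        (\<forall>k. e' k = e (f k)))"

end

theory Submission
  imports Defs
begin

lemma sub2: "subword e j 2 = [e j, e (j+1)]"
  by (simp add: subword_def numeral_2_eq_2)

lemma all_after:
  assumes "\<forall>j. e j = x \<longrightarrow> e (j+1) = x" "e i = x"
  shows "e (i + int n) = x"
  proof (induction n)
  case 0 then show ?case using assms by simp
next
  case (Suc n) then show ?case using assms(1) by (metis add.assoc of_nat_Suc add.commute)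
qed

lemma const_periodic:
  assumes "\<forall>j. e j = x \<longrightarrow> e (j+1) = x" "e i = x"
  shows "eventually_periodic e"
proof -
  have "\<forall>k\<ge>i. e (k + 1) = e k"
  proof (intro allI impI)
    fix k assume "k \<ge> i"
    then have "k = i + int (nat (k - i))" by simp
    then have "e k = x" using all_after[OF assms, of "nat (k-i)"] by simp
    then show "e (k+1) = e k" using assms(1) by auto
  qed
  then show ?thesis unfolding eventually_periodic_def by (intro exI[of _ 1]) auto
qed

lemma no_iso:
  assumes st: "sturmian e" and b1: "e i0 = b" and b2: "e (i0+1) = b" and ab: "a \<noteq> b"
    and lt: "\<forall>x. x = a \<or> x = b"
  shows "\<not> (e i = a \<and> e (i+1) = a)"
proof
  assume aa: "e i = a \<and> e (i+1) = a"
  have np: "\<not> eventually_periodic e" using st unfolding sturmian_def by auto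
  have c3: "card {subword e i 2 | i. True} = 3" using st unfolding sturmian_def by auto
  have "\<exists>j. e j = a \<and> e (j+1) = b"
  proof (rule ccontr)
    assume "\<not> ?thesis"
    then have "\<forall>j. e j = a \<longrightarrow> e (j+1) = a" using lt by metis
    then show False using const_periodic[of e a i] aa np by auto
  qed
  then obtain j1 where j1: "e j1 = a" "e (j1+1) = b" by blast
  have "\<exists>j. e j = b \<and> e (j+1) = a"
  proof (rule ccontr)
    assume "\<not> ?thesis"
    then have "\<forall>j. e j = b \<longrightarrow> e (j+1) = b" using lt by metis
    then show False using const_periodic[of e b i0] b1 np by auto
  qed
  then obtain j2 where j2: "e j2 = b" "e (j2+1) = a" by blast
  let ?S = "{subword e i 2 | i. True}"
  have sub: "?S \<subseteq> {[H,H],[H,V],[V,H],[V,V]}"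
  proof
    fix w assume "w \<in> ?S"
    then obtain k where "w = subword e k 2" by blast
    then show "w \<in> {[H,H],[H,V],[V,H],[V,V]}" by (cases "e k"; cases "e (k+1)") (auto simp: sub2)
  qed
  have fin: "finite ?S" using sub finite_subset by blast
  have "{[a,a],[b,b],[a,b],[b,a]} \<subseteq> ?S"
    using aa b1 b2 j1 j2 by (auto simp: sub2 simp del: One_nat_def) (metis sub2)+
  then have "card {[a,a],[b,b],[a,b],[b,a]} \<le> 3" using card_mono[OF fin] c3 by metis
  moreover have "card {[a,a],[b,b],[a,b],[b,a]} = 4" using ab by simp
  ultimately show False by simp
qed

lemma dec_surj:
  fixes h :: "int \<Rightarrow> int"
  assumes dec: "\<forall>k1 k2. 1 \<le> k1 \<longrightarrow> k1 < k2 \<longrightarrow> h k2 < h k1"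
    and bnd: "\<forall>k\<ge>1. h k < c" and sj: "\<forall>m<c. \<exists>k\<ge>1. h k = m"
  shows "h (1 + int n) = c - 1 - int n"
proof -
  have mono: "h k2 \<le> h k1" if "1 \<le> k1" "k1 \<le> k2" for k1 k2
  proof (cases "k1 = k2")
    case False then show ?thesis using dec that by (meson less_le order.strict_implies_order)
  qed simp
  show ?thesis
proof (induction n)
  case 0
  obtain k where k: "k \<ge> 1" "h k = c - 1" using sj[rule_format, of "c - 1"] by auto
  have "h k \<le> h 1" using mono k(1) by simp
  then show ?case using bnd k by force
next
  case (Suc n)
  have "h (1 + int (Suc n)) < h (1 + int n)" using dec by auto
  moreover obtain k where k: "k \<ge> 1" "h k = c - 2 - int n" using sj[rule_format, of "c - 2 - int n"] by auto
  moreover have "k \<ge> 1 + int (Suc n)"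
  proof (rule ccontr)
    assume "\<not> ?thesis"
    then have "k \<le> 1 + int n" by simp
    then have "h k \<ge> h (1 + int n)" using mono k(1) by simp
    then show False using Suc k by simp
  qed
  then have "h k \<le> h (1 + int (Suc n))" using mono by simp
  ultimately show ?case using Suc by simp
qed
qed



lemma refl_index:
  fixes f \<psi> :: "int \<Rightarrow> int"
  assumes sm: "strict_mono f"
    and mp: "\<forall>j\<in>range f. j > f A \<longrightarrow> \<psi> j \<in> range f \<and> \<psi> j < f (A-1)"
    and anti: "\<forall>j1\<in>range f. \<forall>j2\<in>range f. f A < j1 \<longrightarrow> j1 < j2 \<longrightarrow> \<psi> j2 < \<psi> j1"
    and sj: "\<forall>x\<in>range f. x < f (A-1) \<longrightarrow> (\<exists>j\<in>range f. j > f A \<and> \<psi> j = x)"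
    and k: "k \<ge> 1"
  shows "\<psi> (f (A+k)) = f (A-1-k)"
proof -
  have inj: "inj f" using sm strict_mono_on_imp_inj_on by blast
  define h where "h k = inv f (\<psi> (f (A+k)))" for k
  have gt: "f (A+k) > f A" if "k \<ge> 1" for k using sm that by (simp add: strict_mono_less)
  have fh: "f (h k) = \<psi> (f (A+k))" if "k \<ge> 1" for k
    unfolding h_def using mp gt[OF that] by (simp add: f_inv_into_f)
  have dec: "\<forall>k1 k2. 1 \<le> k1 \<longrightarrow> k1 < k2 \<longrightarrow> h k2 < h k1"
  proof (intro allI impI)
    fix k1 k2 :: int assume a: "1 \<le> k1" "k1 < k2"
    have "f (A+k1) < f (A+k2)" using sm a by (simp add: strict_mono_less)
    then have "\<psi> (f (A+k2)) < \<psi> (f (A+k1))" using anti gt[OF a(1)] by blast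
    then have "f (h k2) < f (h k1)" using fh a by simp
    then show "h k2 < h k1" using sm by (simp add: strict_mono_less)
  qed
  have bnd: "\<forall>k\<ge>1. h k < A - 1"
  proof (intro allI impI)
    fix k :: int assume "k \<ge> 1"
    then have "f (h k) < f (A-1)" using fh mp gt by auto
    then show "h k < A - 1" using sm by (simp add: strict_mono_less)
  qed
  have sjh: "\<forall>m<A-1. \<exists>k\<ge>1. h k = m"
  proof (intro allI impI)
    fix m assume "m < A - 1"
    then have "f m < f (A-1)" using sm by (simp add: strict_mono_less)
    then obtain j where j: "j \<in> range f" "j > f A" "\<psi> j = f m" using sj by blast
    then obtain i where i: "j = f i" by blast
    then have "i > A" using j sm by (simp add: strict_mono_less)
    then have "h (i - A) = m" unfolding h_def using i j inj by simp
    then show "\<exists>k\<ge>1. h k = m" using \<open>i > A\<close> by (intro exI[of _ "i - A"]) auto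
  qed
  have "h (1 + int (nat (k-1))) = A - 1 - 1 - int (nat (k-1))"
    using dec_surj[OF dec bnd sjh] by blast
  then have "h k = A - 1 - k" using k by simp
  then show ?thesis using fh[OF k] by simp
qed

theorem lemma4p2:
  fixes e e' :: bisequence
  assumes "sturmian e" and "almost_symmetric e" and "derived_seq e e'"
  shows "almost_symmetric e'"
proof -
  obtain N where symN: "\<forall>k\<ge>1. e (N + k) = e (N - k - 1)" and neq: "e N \<noteq> e (N - 1)"
    using assms(2) unfolding almost_symmetric_def by blast
  obtain b f i0 where bb: "e i0 = b" "e (i0+1) = b" and sm: "strict_mono (f :: int \<Rightarrow> int)"
    and rf: "range f = {i. \<not> (e i = b \<and> e (i - 1) \<noteq> b)}" and ee: "\<forall>k. e' k = e (f k)"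
    using assms(3) unfolding derived_seq_def by blast
  obtain a where ab: "a \<noteq> b" and lt: "\<forall>x. x = a \<or> x = b"
    by (cases b) (metis letter.exhaust letter.distinct(1), metis letter.exhaust letter.distinct(2))
  have iso: "\<And>i. \<not> (e i = a \<and> e (i+1) = a)" using no_iso[OF assms(1) bb ab lt] by blast
  have memK: "\<And>x. x \<in> range f \<longleftrightarrow> e x = a \<or> e (x-1) = b" using rf ab lt by auto
  have symL: "e (2*N-1-x) = e x" if "x \<le> N - 2" for x
    using symN[rule_format, of "N-1-x"] that by (simp add: algebra_simps)
  have symR: "e (2*N-1-j) = e j" if "j \<ge> N + 1" for j
    using symN[rule_format, of "j - N"] that by (simp add: algebra_simps)
  obtain c where c1: "c = N \<or> c = N+1" and c2: "e N = b \<longrightarrow> c = N+1"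
    and c3: "c = N+1 \<longrightarrow> e N = b \<and> e (N-2) = b \<and> e (N-1) = a"
    and c4: "c \<in> range f" and c5: "N - 1 \<in> range f" and c6: "e c \<noteq> e (N-1)"
    and c7: "\<forall>y. N-1 < y \<and> y < c \<longrightarrow> y \<notin> range f"
  proof (cases "e N = a")
    case True
    then have "e (N-1) = b" using neq lt by metis
    moreover have "e (N+1) = e (N-2)" using symN[rule_format, of 1] by simp
    moreover have "e (N+1) \<noteq> a" using iso[of N] True by simp
    ultimately have "e (N-2) = b" using lt by metis
    moreover have "\<forall>y. N-1 < y \<and> y < N \<longrightarrow> y \<notin> range f" by auto
    moreover have "N \<in> range f" "N - 1 \<in> range f" using memK True \<open>e (N-2) = b\<close> by (auto simp: algebra_simps)
    ultimately show ?thesis using that[of N] True neq ab by auto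
  next
    case False
    then have eN: "e N = b" using lt by metis
    then have eN1: "e (N-1) = a" using neq lt by metis
    have "e (N+1) = e (N-2)" using symN[rule_format, of 1] by simp
    moreover have "e (N-2) \<noteq> a" using iso[of "N-2"] eN1 by simp
    ultimately have "e (N-2) = b" "e (N+1) = b" using lt by metis+
    moreover have "\<forall>y. N-1 < y \<and> y < N+1 \<longrightarrow> y = N" by auto
    moreover have "N \<notin> range f" "N+1 \<in> range f" "N - 1 \<in> range f" using memK eN eN1 ab by auto
    ultimately have "\<forall>y. N-1 < y \<and> y < N+1 \<longrightarrow> y \<notin> range f" by metis
    then show ?thesis using that[of "N+1"] eN eN1 ab \<open>e (N-2) = b\<close> \<open>e (N+1) = b\<close>
      \<open>N+1 \<in> range f\<close> \<open>N - 1 \<in> range f\<close> by auto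
  qed
  obtain A where A: "f A = c" using c4 by blast
  have A1: "f (A - 1) = N - 1"
  proof -
    obtain j where j: "f j = N - 1" using c5 by (metis rangeE)
    have "f j < f A" using j A c1 by auto
    then have "j < A" using sm by (simp add: strict_mono_less)
    then have "f j \<le> f (A-1)" using sm by (simp add: strict_mono_less_eq)
    moreover have "f (A-1) < c" using A strict_monoD[OF sm, of "A-1" A] by simp
    ultimately show ?thesis using c7 j by (metis rangeI order.not_eq_order_implies_strict)
  qed
  define \<psi> where "\<psi> j = (if e j = a then 2*N-1-j else 2*N-j)" for j
  have Kb: "e (j-1) = b" if "j \<in> range f" "e j = b" for j using that memK ab by auto
  have mp: "\<forall>j\<in>range f. j > f A \<longrightarrow> \<psi> j \<in> range f \<and> \<psi> j < f (A-1) \<and> e (\<psi> j) = e j"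
  proof (intro ballI impI)
    fix j assume jK: "j \<in> range f" and jc: "j > f A"
    show "\<psi> j \<in> range f \<and> \<psi> j < f (A-1) \<and> e (\<psi> j) = e j"
    proof (cases "e j = a")
      case True
      then show ?thesis using jc A c1 A1 symR[of j] memK \<psi>_def by auto
    next
      case False
      then have ejb: "e j = b" using lt by metis
      then have "e (j-1) = b" using Kb jK by blast
      have "j \<noteq> N + 1"
      proof
        assume "j = N + 1"
        then have "e N = b" using \<open>e (j-1) = b\<close> by simp
        then show False using c2 jc A \<open>j = N + 1\<close> by simp
      qed
      then have "j \<ge> N + 2" using jc A c1 by auto
      then have "e (2*N - j) = b" "e (2*N-j-1) = b"
        using symR[of "j-1"] symR[of j] ejb \<open>e (j-1) = b\<close> by (simp_all add: algebra_simps)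
      then show ?thesis using False A1 \<open>j \<ge> N+2\<close> memK \<psi>_def ejb by auto
    qed
  qed
  have anti: "\<forall>j1\<in>range f. \<forall>j2\<in>range f. f A < j1 \<longrightarrow> j1 < j2 \<longrightarrow> \<psi> j2 < \<psi> j1"
  proof (intro ballI impI)
    fix j1 j2 assume K: "j1 \<in> range f" "j2 \<in> range f" and "f A < j1" and lt12: "j1 < j2"
    have "\<not> (e j2 = b \<and> e j1 = a \<and> j2 = j1 + 1)" using Kb[OF K(2)] ab by auto
    then show "\<psi> j2 < \<psi> j1" using lt12 lt \<psi>_def ab by (smt (verit))
  qed
  have sj: "\<forall>x\<in>range f. x < f (A-1) \<longrightarrow> (\<exists>j\<in>range f. j > f A \<and> \<psi> j = x)"
  proof (intro ballI impI)
    fix x assume xK: "x \<in> range f" and "x < f (A-1)"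
    then have xN: "x \<le> N - 2" using A1 by simp
    show "\<exists>j\<in>range f. j > f A \<and> \<psi> j = x"
    proof (cases "e x = a")
      case True
      have "x \<noteq> N - 2 \<or> c = N" using c1 c3 True ab by auto
      then have "2*N-1-x > f A" using xN A c1 by auto
      moreover have "e (2*N-1-x) = a" using symL[OF xN] True by simp
      ultimately show ?thesis using memK \<psi>_def by (intro bexI[of _ "2*N-1-x"]) auto
    next
      case False
      then have exb: "e x = b" using lt by metis
      then have ex1: "e (x-1) = b" using Kb xK by blast
      have "e (2*N-x) = b" using symL[of "x-1"] xN ex1 by (simp add: algebra_simps)
      moreover have "e (2*N-x-1) = b" using symL[of x] xN exb by (simp add: algebra_simps)
      moreover have "2*N - x > f A" using xN A c1 by auto
      ultimately show ?thesis using memK \<psi>_def ab by (intro bexI[of _ "2*N-x"]) auto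
    qed
  qed
  have key: "\<psi> (f (A+k)) = f (A-1-k)" if "k \<ge> 1" for k
    using refl_index[OF sm _ anti sj that] mp by blast
  show ?thesis unfolding almost_symmetric_def
  proof (intro exI[of _ A] conjI allI impI)
    fix k :: int assume k: "k \<ge> 1"
    have "f (A+k) > f A" using sm k by (simp add: strict_mono_less)
    then have "e (\<psi> (f (A+k))) = e (f (A+k))" using mp by blast
    then show "e' (A + k) = e' (A - k - 1)" using key[OF k] ee by (simp add: algebra_simps)
  next
    show "e' A \<noteq> e' (A - 1)" using ee A A1 c6 by simp
  qed
qed

end
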